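(* Let $n\ge1$ and let $G$ be a canonical weighted voting game on players $\{1,\dots,n\}$ whose set $W_{\min,G}$ of minimal winning coalitions is nonempty. Then there exist a coalition $C\in W_{\min,G}$ and a canonical weighted voting game $G'$ on players $\{1,\dots,n\}$ whose set of minimal winning coalitions is exactly $W_{\min,G}\setminus\{C\}$.
   Context: A simple game on $N=\{1,\dots,n\}$ is a function $v:2^N\to\{0,1\}$ (the all-losing game is allowed); $S$ is winning if $v(S)=1$. A minimal winning coalition is a winning coalition all of whose sets $S\setminus\{i\}$, $i\in S$, are losing. A weighted voting game is a simple game for which there exist $q\ge0$, $w_1,\dots,w_n\ge0$ with $v(S)=1\iff\sum_{i\in S}w_i\ge q$. Write $i\succeq j$ if $v(S\cup\{i\})\ge v(S\cup\{j\})$ for all $S\subseteq N\setminus\{i,j\}$. A canonical weighted voting game is a weighted voting game with $1\succeq2\succeq\cdots\succeq n$. *)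

theory Defs
  imports Complex_Main
begin

text \<open>A simple game on players N = {1..n} is represented by v :: nat set => bool;
  only its values on subsets of {1..n} matter. S is winning iff v S.\<close>

definition weighted_voting_game :: "nat \<Rightarrow> (nat set \<Rightarrow> bool) \<Rightarrow> bool" where
  "weighted_voting_game n v \<longleftrightarrow>
     (\<exists>(q::real) (w::nat \<Rightarrow> real). q \<ge> 0 \<and> (\<forall>i\<in>{1..n}. w i \<ge> 0) \<and>
        (\<forall>S. S \<subseteq> {1..n} \<longrightarrow> (v S \<longleftrightarrow> (\<Sum>i\<in>S. w i) \<ge> q)))"

definition desirable :: "nat \<Rightarrow> (nat set \<Rightarrow> bool) \<Rightarrow> nat \<Rightarrow> nat \<Rightarrow> bool" where
  "desirable n v i j \<longleftrightarrow>
     (\<forall>S. S \<subseteq> {1..n} - {i, j} \<longrightarrow> (v (S \<union> {j}) \<longrightarrow> v (S \<union> {i})))"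

definition canonical_wvg :: "nat \<Rightarrow> (nat set \<Rightarrow> bool) \<Rightarrow> bool" where
  "canonical_wvg n v \<longleftrightarrow> weighted_voting_game n v \<and>
     (\<forall>i. 1 \<le> i \<and> i < n \<longrightarrow> desirable n v i (Suc i))"

definition min_winning :: "nat \<Rightarrow> (nat set \<Rightarrow> bool) \<Rightarrow> nat set set" where
  "min_winning n v = {S. S \<subseteq> {1..n} \<and> v S \<and> (\<forall>i\<in>S. \<not> v (S - {i}))}"

end

theory Submission
  imports Defs
begin

definition rep :: "nat \<Rightarrow> (nat set \<Rightarrow> bool) \<Rightarrow> (nat \<Rightarrow> real) \<Rightarrow> real \<Rightarrow> bool" where
  "rep n v u q \<longleftrightarrow> (\<forall>S. S \<subseteq> {1..n} \<longrightarrow> (v S \<longleftrightarrow> q \<le> sum u S))"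

lemma fin_min:
  fixes f :: "'a \<Rightarrow> 'b::linorder"
  assumes "finite A" "A \<noteq> {}"
  shows "\<exists>x\<in>A. \<forall>y\<in>A. f x \<le> f y"
proof -
  have "Min (f ` A) \<in> f ` A" using assms by simp
  then obtain x where "x \<in> A" "f x = Min (f ` A)" by auto
  then show ?thesis using assms by (metis Min_le finite_imageI imageI)
qed

lemma fin_max:
  fixes f :: "'a \<Rightarrow> 'b::linorder"
  assumes "finite A" "A \<noteq> {}"
  shows "\<exists>x\<in>A. \<forall>y\<in>A. f y \<le> f x"
proof -
  have "Max (f ` A) \<in> f ` A" using assms by simp
  then obtain x where "x \<in> A" "f x = Max (f ` A)" by auto
  then show ?thesis using assms by (metis Max_ge finite_imageI imageI)
qed

lemma sum_upd2:
  fixes u :: "nat \<Rightarrow> real"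
  assumes "finite S"
  shows "sum (u(i := u (Suc i), Suc i := u i)) S =
    sum u S + (if i \<in> S then u (Suc i) - u i else 0) + (if Suc i \<in> S then u i - u (Suc i) else 0)"
proof -
  have "\<And>k. (u(i := u (Suc i), Suc i := u i)) k =
     u k + (if k = i then u (Suc i) - u i else 0) + (if k = Suc i then u i - u (Suc i) else 0)"
    by auto
  then have "sum (u(i := u (Suc i), Suc i := u i)) S =
     sum (\<lambda>k. u k + (if k = i then u (Suc i) - u i else 0) + (if k = Suc i then u i - u (Suc i) else 0)) S"
    by presburger
  also have "\<dots> = sum u S + sum (\<lambda>k. if k = i then u (Suc i) - u i else 0) S
       + sum (\<lambda>k. if k = Suc i then u i - u (Suc i) else 0) S"
    by (simp add: sum.distrib)
  finally show ?thesis using assms by simp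
qed

lemma swap_rep:
  assumes r: "rep n v u q" and d: "desirable n v i (Suc i)" and i: "1 \<le> i" "i < n"
    and lt: "u i < u (Suc i)"
  shows "rep n v (u(i := u (Suc i), Suc i := u i)) q"
  unfolding rep_def
proof (intro allI impI)
  fix S assume S: "S \<subseteq> {1..n}"
  have fS: "finite S" using S finite_subset by blast
  let ?u = "u(i := u (Suc i), Suc i := u i)"
  have e: "sum ?u S = sum u S + (if i \<in> S then u (Suc i) - u i else 0) + (if Suc i \<in> S then u i - u (Suc i) else 0)"
    using sum_upd2[OF fS] .
  show "v S \<longleftrightarrow> q \<le> sum ?u S"
  proof (cases "i \<in> S \<longleftrightarrow> Suc i \<in> S")
    case True
    then have "sum ?u S = sum u S" using e by auto
    then show ?thesis using r S unfolding rep_def by auto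
  next
    case False
    show ?thesis
    proof (cases "i \<in> S")
      case True
      with False have nS: "Suc i \<notin> S" by auto
      let ?S' = "insert (Suc i) (S - {i})"
      have S'N: "?S' \<subseteq> {1..n}" using S i by auto
      have "sum u ?S' = sum u (S - {i}) + u (Suc i)" using fS nS by simp
      moreover have "sum u S = sum u (S - {i}) + u i" using fS True sum.remove by (metis add.commute)
      ultimately have eq: "sum ?u S = sum u ?S'" using e True nS by simp
      have sub: "S - {i} \<subseteq> {1..n} - {i, Suc i}" using S nS by auto
      have "v ?S' \<Longrightarrow> v S" using d sub unfolding desirable_def
        by (metis True insert_Diff insert_is_Un sup_commute)
      moreover have "sum u S \<le> sum ?u S" using e True nS lt by simp
      ultimately show ?thesis using r S S'N eq unfolding rep_def by (metis order_trans)
    next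
      case nT: False
      with False have T: "Suc i \<in> S" by auto
      let ?S' = "insert i (S - {Suc i})"
      have S'N: "?S' \<subseteq> {1..n}" using S i by auto
      have "sum u ?S' = sum u (S - {Suc i}) + u i" using fS nT by simp
      moreover have "sum u S = sum u (S - {Suc i}) + u (Suc i)" using fS T sum.remove by (metis add.commute)
      ultimately have eq: "sum ?u S = sum u ?S'" using e T nT by simp
      have sub: "S - {Suc i} \<subseteq> {1..n} - {i, Suc i}" using S nT by auto
      have "v S \<Longrightarrow> v ?S'" using d sub unfolding desirable_def
        by (metis T insert_Diff insert_is_Un sup_commute)
      moreover have "sum ?u S \<le> sum u S" using e T nT lt by simp
      ultimately show ?thesis using r S S'N eq unfolding rep_def by (metis order_trans)
    qed
  qed
qed

lemma sorted_rep:
  assumes r: "rep n v w q" and nn: "\<forall>i\<in>{1..n}. 0 \<le> w i"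
    and d: "\<forall>i. 1 \<le> i \<and> i < n \<longrightarrow> desirable n v i (Suc i)"
  shows "\<exists>u. rep n v u q \<and> (\<forall>i\<in>{1..n}. 0 \<le> u i) \<and> (\<forall>i. 1 \<le> i \<and> i < n \<longrightarrow> u (Suc i) \<le> u i)"
proof -
  define N where "N = {1..n}"
  define F where "F = {f. (\<forall>x. (x \<in> N \<longrightarrow> f x \<in> w ` N) \<and> (x \<notin> N \<longrightarrow> f x = 0)) \<and> rep n v f q}"
  have finF: "finite F"
    by (rule finite_subset[OF _ finite_set_of_finite_funs[of N "w ` N" 0]]) (auto simp: F_def N_def)
  define f0 where "f0 = (\<lambda>x. if x \<in> N then w x else 0)"
  have "rep n v f0 q" unfolding rep_def
  proof (intro allI impI)
    fix S assume S: "S \<subseteq> {1..n}"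
    then have "sum f0 S = sum w S" unfolding f0_def N_def by (intro sum.cong) auto
    then show "v S \<longleftrightarrow> q \<le> sum f0 S" using r S unfolding rep_def by simp
  qed
  then have "f0 \<in> F" unfolding F_def f0_def by auto
  define cost where "cost = (\<lambda>f::nat\<Rightarrow>real. \<Sum>k\<in>N. real k * f k)"
  obtain f where fF: "f \<in> F" and fmin: "\<forall>g\<in>F. cost f \<le> cost g"
    using fin_min[OF finF, of cost] \<open>f0 \<in> F\<close> by blast
  have frep: "rep n v f q" using fF F_def by auto
  have fnn: "\<forall>i\<in>{1..n}. 0 \<le> f i" using fF nn unfolding F_def N_def by fastforce
  have "\<forall>i. 1 \<le> i \<and> i < n \<longrightarrow> f (Suc i) \<le> f i"
  proof (intro allI impI, rule ccontr)
    fix i assume i: "1 \<le> i \<and> i < n" and "\<not> f (Suc i) \<le> f i"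
    then have lt: "f i < f (Suc i)" by simp
    define g where "g = f(i := f (Suc i), Suc i := f i)"
    have grep: "rep n v g q" unfolding g_def using swap_rep[OF frep _ _ _ lt] d i by auto
    have iN: "i \<in> N" "Suc i \<in> N" using i N_def by auto
    have "g \<in> F" using fF iN grep unfolding F_def g_def by auto
    have "\<And>k. real k * g k = real k * f k + (if k = i then real i * (f (Suc i) - f i) else 0)
          + (if k = Suc i then real (Suc i) * (f i - f (Suc i)) else 0)"
      unfolding g_def by (auto simp: algebra_simps)
    then have "cost g = (\<Sum>k\<in>N. real k * f k + (if k = i then real i * (f (Suc i) - f i) else 0)
          + (if k = Suc i then real (Suc i) * (f i - f (Suc i)) else 0))"
      unfolding cost_def by presburger
    also have "\<dots> = cost f + real i * (f (Suc i) - f i) + real (Suc i) * (f i - f (Suc i))"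
      unfolding cost_def using iN by (simp add: sum.distrib N_def)
    also have "\<dots> = cost f - (f (Suc i) - f i)" by (simp add: algebra_simps)
    finally have "cost g < cost f" using lt by simp
    then show False using fmin \<open>g \<in> F\<close> by force
  qed
  then show ?thesis using frep fnn by blast
qed

lemma mono_rep:
  assumes r: "rep n v u q" and nn: "\<forall>i\<in>{1..n}. 0 \<le> u i"
    and "S \<subseteq> T" "T \<subseteq> {1..n}" "v S"
  shows "v T"
proof -
  have "finite T" using assms(4) finite_subset by blast
  then have "sum u S \<le> sum u T" using assms by (intro sum_mono2) auto
  then show ?thesis using r assms unfolding rep_def by (meson order_trans)
qed

lemma exists_min:
  assumes "S \<subseteq> {1..n}" "v S"
  shows "\<exists>T\<in>min_winning n v. T \<subseteq> S"
  using assms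
proof (induction "card S" arbitrary: S rule: less_induct)
  case less
  show ?case
  proof (cases "\<forall>i\<in>S. \<not> v (S - {i})")
    case True
    then show ?thesis using less.prems unfolding min_winning_def by auto
  next
    case False
    then obtain i where i: "i \<in> S" "v (S - {i})" by auto
    have "finite S" using less.prems finite_subset by blast
    then have "card (S - {i}) < card S" using i by (meson card_Diff1_less)
    then obtain T where "T \<in> min_winning n v" "T \<subseteq> S - {i}"
      using less.hyps[of "S - {i}"] less.prems i by blast
    then show ?thesis by blast
  qed
qed

lemma sorted_chain:
  assumes s: "\<forall>i. 1 \<le> i \<and> i < n \<longrightarrow> u (Suc i) \<le> (u i::real)"
    and "1 \<le> i" "i \<le> j" "j \<le> n"
  shows "u j \<le> u i"
  using assms(3,4)
proof (induction j)
  case 0 then show ?case by simp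
next
  case (Suc j)
  show ?case
  proof (cases "i = Suc j")
    case False
    then have "i \<le> j" using Suc by simp
    then have "u j \<le> u i" using Suc by simp
    moreover have "u (Suc j) \<le> u j" using s Suc \<open>i \<le> j\<close> assms(2) by simp
    ultimately show ?thesis by simp
  qed simp
qed

lemma main:
  assumes r: "rep n v u q" and nn: "\<forall>i\<in>{1..n}. 0 \<le> u i"
    and srt: "\<forall>i. 1 \<le> i \<and> i < n \<longrightarrow> u (Suc i) \<le> (u i::real)" and q0: "0 \<le> q"
    and d: "\<forall>i. 1 \<le> i \<and> i < n \<longrightarrow> desirable n v i (Suc i)"
    and ne: "min_winning n v \<noteq> {}"
  shows "\<exists>C \<in> min_winning n v. \<exists>v' :: nat set \<Rightarrow> bool.
           canonical_wvg n v' \<and> min_winning n v' = min_winning n v - {C}"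
proof (cases "v {}")
  case True
  have e: "{} \<in> min_winning n v" using True unfolding min_winning_def by simp
  have c: "canonical_wvg n (\<lambda>S. False)"
    unfolding canonical_wvg_def weighted_voting_game_def desirable_def
    by (rule conjI, rule exI[of _ 1], rule exI[of _ "\<lambda>_. 0"]) auto
  have "min_winning n v - {{}} = {}"
  proof (rule ccontr)
    assume "min_winning n v - {{}} \<noteq> {}"
    then obtain S where S: "S \<in> min_winning n v" "S \<noteq> {}" by auto
    then obtain i where i: "i \<in> S" by auto
    have "v (S - {i})" using mono_rep[OF r nn, of "{}" "S - {i}"] True S unfolding min_winning_def by auto
    then show False using S i unfolding min_winning_def by auto
  qed
  moreover have "min_winning n (\<lambda>S. False) = {}" unfolding min_winning_def by simp
  ultimately show ?thesis using e c by metis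
next
  case False
  define N where "N = {1..n}"
  define M where "M = min_winning n v"
  have MN: "\<And>T. T \<in> M \<Longrightarrow> T \<subseteq> N \<and> v T \<and> (\<forall>i\<in>T. \<not> v (T - {i}))"
    unfolding M_def min_winning_def N_def by auto
  have finN: "finite N" unfolding N_def by simp
  have finM: "finite M" using MN finN by (meson Pow_iff finite_Pow_iff finite_subset subsetI)
  have Tne: "\<And>T. T \<in> M \<Longrightarrow> T \<noteq> {}" using MN False by blast
  have finU: "finite (\<Union>M)" using MN finN by (meson Sup_least finite_subset)
  have neU: "\<Union>M \<noteq> {}" using ne Tne M_def by auto
  define p where "p = Max (\<Union>M)"
  have pU: "p \<in> \<Union>M" using Max_in[OF finU neU] p_def by simp
  have ple: "\<And>T x. T \<in> M \<Longrightarrow> x \<in> T \<Longrightarrow> x \<le> p" using finU p_def by (meson Max_ge UnionI)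
  have pN: "p \<in> N" using pU MN by blast
  define A where "A = {T\<in>M. p \<in> T}"
  have finA: "finite A" using finM A_def by simp
  have neA: "A \<noteq> {}" using pU A_def by auto
  obtain C0 where C0: "C0 \<in> A" "\<forall>T\<in>A. sum u C0 \<le> sum u T"
    using fin_min[OF finA neA, of "sum u"] by blast
  define B where "B = {T\<in>A. sum u T = sum u C0}"
  have finB: "finite B" using finA B_def by simp
  have neB: "B \<noteq> {}" using C0 B_def by auto
  obtain C where C: "C \<in> B" "\<forall>T\<in>B. \<Sum>T \<le> \<Sum>C"
    using fin_max[OF finB neB, of Sum] by blast
  have CM: "C \<in> M" and pC: "p \<in> C" using C B_def A_def by auto
  have Cmin: "\<And>T. T \<in> M \<Longrightarrow> p \<in> T \<Longrightarrow> sum u C \<le> sum u T"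
    using C C0 B_def A_def by auto
  have Cmax: "\<And>T. T \<in> M \<Longrightarrow> p \<in> T \<Longrightarrow> sum u T = sum u C \<Longrightarrow> \<Sum>T \<le> \<Sum>C"
    using C C0 B_def A_def by auto
  have CN: "C \<subseteq> N" and vC: "v C" and Closs: "\<forall>i\<in>C. \<not> v (C - {i})" using MN[OF CM] by auto
  have CP: "C \<subseteq> {..p}" using ple CM by auto
  have finC: "finite C" using CN finN finite_subset by blast
  have monoN: "\<And>S T. S \<subseteq> T \<Longrightarrow> T \<subseteq> N \<Longrightarrow> v S \<Longrightarrow> v T"
    using mono_rep[OF r nn] N_def by blast
  have Fprop: "\<And>R. R \<subseteq> C \<Longrightarrow> R \<noteq> C \<Longrightarrow> \<not> v R"
  proof
    fix R assume R: "R \<subseteq> C" "R \<noteq> C" "v R"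
    then obtain i where "i \<in> C" "i \<notin> R" by auto
    then have "v (C - {i})" using monoN[of R "C - {i}"] R CN by auto
    then show False using Closs \<open>i \<in> C\<close> by auto
  qed
  have F1: "\<And>X. X \<subseteq> N \<Longrightarrow> v X \<Longrightarrow> v (X \<inter> {..p})"
  proof -
    fix X assume X: "X \<subseteq> N" "v X"
    obtain T where T: "T \<in> M" "T \<subseteq> X" using exists_min[of X n v] X N_def M_def by auto
    have "T \<subseteq> X \<inter> {..p}" using T ple by auto
    then show "v (X \<inter> {..p})" using monoN[of T "X \<inter> {..p}"] X MN[OF T(1)] by auto
  qed
  have repN: "\<And>S. S \<subseteq> N \<Longrightarrow> v S \<longleftrightarrow> q \<le> sum u S" using r unfolding rep_def N_def by auto
  define L where "L = {S. S \<subseteq> N \<and> \<not> v S}"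
  have finL: "finite L" using finN L_def by simp
  have eL: "{} \<in> L" using False L_def by simp
  define \<gamma> where "\<gamma> = Min ((\<lambda>S. q - sum u S) ` L)"
  have gpos: "\<gamma> > 0"
  proof -
    have "\<gamma> \<in> (\<lambda>S. q - sum u S) ` L" using finL eL \<gamma>_def by (metis Min_in empty_iff finite_imageI image_is_empty)
    then obtain S where "S \<in> L" "\<gamma> = q - sum u S" by auto
    then show ?thesis using repN L_def by auto
  qed
  have gle: "\<And>S. S \<subseteq> N \<Longrightarrow> \<not> v S \<Longrightarrow> sum u S \<le> q - \<gamma>"
  proof -
    fix S assume "S \<subseteq> N" "\<not> v S"
    then have "S \<in> L" using L_def by simp
    then have "\<gamma> \<le> q - sum u S" using finL \<gamma>_def by simp
    then show "sum u S \<le> q - \<gamma>" by simp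
  qed
  define \<epsilon> where "\<epsilon> = \<gamma> / (real n + 1)"
  have epos: "\<epsilon> > 0" using gpos \<epsilon>_def by simp
  have en: "\<epsilon> * real n < \<gamma>"
  proof -
    have "\<epsilon> * (real n + 1) = \<gamma>" using \<epsilon>_def by simp
    then show ?thesis using epos by (simp add: algebra_simps)
  qed
  have eg: "\<epsilon> \<le> \<gamma>"
  proof -
    have "\<epsilon> * 1 \<le> \<epsilon> * (real n + 1)" using epos by (intro mult_left_mono) auto
    then show ?thesis using \<epsilon>_def by simp
  qed
  define \<delta> where "\<delta> = sum u C - q + \<epsilon> / 2"
  have dpos: "\<delta> > 0" using repN[OF CN] vC epos \<delta>_def by simp
  have dle: "\<delta> \<le> u p"
  proof -
    have "sum u (C - {p}) \<le> q - \<gamma>" using gle[of "C - {p}"] CN Closs pC by auto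
    moreover have "sum u C = u p + sum u (C - {p})" using finC pC sum.remove by metis
    ultimately show ?thesis using eg epos \<delta>_def by simp
  qed
  define u' where "u' = (\<lambda>k. if k \<le> p then u k + (if k \<notin> C then \<epsilon> else 0) - (if k = p then \<delta> else 0) else 0)"
  have u'nn: "\<forall>k\<in>N. 0 \<le> u' k"
  proof
    fix k assume k: "k \<in> N"
    have "0 \<le> u k" using nn k N_def by auto
    then show "0 \<le> u' k" using dle pC epos unfolding u'_def by auto
  qed
  define E where "E = (\<lambda>R. sum (\<lambda>k. if k \<notin> C then \<epsilon> else 0) R)"
  have sumu': "\<And>S. S \<subseteq> N \<Longrightarrow> sum u' S = sum u (S \<inter> {..p}) + E (S \<inter> {..p}) - (if p \<in> S then \<delta> else 0)"
  proof -
    fix S assume S: "S \<subseteq> N"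
    have fS: "finite S" using S finN finite_subset by blast
    have "sum u' S = sum u' (S \<inter> {..p}) + sum u' (S - {..p})" using fS by (metis sum.Int_Diff)
    moreover have "sum u' (S - {..p}) = 0" unfolding u'_def by (intro sum.neutral) auto
    moreover have "sum u' (S \<inter> {..p}) = sum (\<lambda>k. u k + (if k \<notin> C then \<epsilon> else 0) - (if k = p then \<delta> else 0)) (S \<inter> {..p})"
      unfolding u'_def by (intro sum.cong) auto
    moreover have "\<dots> = sum u (S \<inter> {..p}) + E (S \<inter> {..p}) - sum (\<lambda>k. if k = p then \<delta> else 0) (S \<inter> {..p})"
      unfolding E_def by (simp add: sum.distrib sum_subtractf)
    moreover have "sum (\<lambda>k. if k = p then \<delta> else 0) (S \<inter> {..p}) = (if p \<in> S then \<delta> else 0)"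
      using fS by simp
    ultimately show "sum u' S = sum u (S \<inter> {..p}) + E (S \<inter> {..p}) - (if p \<in> S then \<delta> else 0)" by simp
  qed
  have Enn: "\<And>R. 0 \<le> E R" unfolding E_def using epos by (intro sum_nonneg) auto
  have Ele: "\<And>R. R \<subseteq> N \<Longrightarrow> E R \<le> \<epsilon> * real n"
  proof -
    fix R assume R: "R \<subseteq> N"
    have "E R \<le> sum (\<lambda>_. \<epsilon>) R" unfolding E_def using epos by (intro sum_mono) auto
    also have "\<dots> = \<epsilon> * real (card R)" by simp
    also have "\<dots> \<le> \<epsilon> * real n"
    proof -
      have "card R \<le> card N" using R finN card_mono by blast
      then show ?thesis using epos N_def by simp
    qed
    finally show "E R \<le> \<epsilon> * real n" .
  qed
  have Epos: "\<And>R k. R \<subseteq> N \<Longrightarrow> k \<in> R \<Longrightarrow> k \<notin> C \<Longrightarrow> \<epsilon> \<le> E R"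
  proof -
    fix R k assume R: "R \<subseteq> N" "k \<in> R" "k \<notin> C"
    have "finite R" using R finN finite_subset by blast
    then have "(if k \<notin> C then \<epsilon> else 0) \<le> E R" unfolding E_def
      using R epos by (intro member_le_sum) auto
    then show "\<epsilon> \<le> E R" using R by simp
  qed
  have EC: "E C = 0" unfolding E_def by (intro sum.neutral) auto
  have key: "\<And>S. S \<subseteq> N \<Longrightarrow> (q \<le> sum u' S) \<longleftrightarrow> (v S \<and> S \<inter> {..p} \<noteq> C)"
  proof -
    fix S assume S: "S \<subseteq> N"
    define R where "R = S \<inter> {..p}"
    have RN: "R \<subseteq> N" using S R_def by auto
    have RS: "R \<subseteq> S" using R_def by auto
    have pRS: "p \<in> R \<longleftrightarrow> p \<in> S" using R_def by auto
    have su: "sum u' S = sum u R + E R - (if p \<in> R then \<delta> else 0)" using sumu'[OF S] R_def pRS by simp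
    show "(q \<le> sum u' S) \<longleftrightarrow> (v S \<and> S \<inter> {..p} \<noteq> C)"
    proof
      assume h: "q \<le> sum u' S"
      have "sum u R \<ge> q - \<epsilon> * real n" using su h Ele[OF RN] dpos by (auto split: if_splits)
      then have "v R" using gle[OF RN] en by force
      then have "v S" using monoN[OF RS S] by simp
      moreover have "R \<noteq> C"
      proof
        assume "R = C"
        then have "sum u' S = sum u C - \<delta>" using su EC pC by simp
        then show False using h \<delta>_def epos by simp
      qed
      ultimately show "v S \<and> S \<inter> {..p} \<noteq> C" using R_def by simp
    next
      assume h: "v S \<and> S \<inter> {..p} \<noteq> C"
      then have vR: "v R" and RC: "R \<noteq> C" using F1[OF S] R_def by auto
      show "q \<le> sum u' S"
      proof (cases "p \<in> R")
        case False
        then show ?thesis using su Enn[of R] repN[OF RN] vR by simp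
      next
        case pR: True
        have fR: "finite R" using RN finN finite_subset by blast
        have sR: "sum u R = u p + sum u (R - {p})" using fR pR sum.remove by metis
        show ?thesis
        proof (cases "v (R - {p})")
          case True
          then have "q \<le> sum u (R - {p})" using repN[of "R - {p}"] RN by auto
          then show ?thesis using su sR pR dle Enn[of R] by simp
        next
          case nv: False
          obtain T where T: "T \<in> M" "T \<subseteq> R" using exists_min[of R n v] RN vR N_def M_def by auto
          have pT: "p \<in> T"
          proof (rule ccontr)
            assume "p \<notin> T"
            then have "T \<subseteq> R - {p}" using T by auto
            then show False using monoN[of T "R - {p}"] RN MN[OF T(1)] nv by auto
          qed
          have "sum u C \<le> sum u T" using Cmin T pT by simp
          also have "sum u T \<le> sum u R" using T fR RN nn N_def by (intro sum_mono2) auto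
          finally have c1: "sum u C \<le> sum u R" .
          have "\<not> R \<subseteq> C" using Fprop[of R] RC vR by auto
          then obtain k where "k \<in> R" "k \<notin> C" by auto
          then have "\<epsilon> \<le> E R" using Epos RN by simp
          then show ?thesis using su pR c1 \<delta>_def epos by simp
        qed
      qed
    qed
  qed
  define v' where "v' = (\<lambda>S. q \<le> sum u' S)"
  have key': "\<And>S. S \<subseteq> N \<Longrightarrow> v' S \<longleftrightarrow> (v S \<and> S \<inter> {..p} \<noteq> C)" using key v'_def by simp
  have CPeq: "C \<inter> {..p} = C" using CP by auto
  have wvg: "weighted_voting_game n v'"
    unfolding weighted_voting_game_def using q0 u'nn N_def v'_def by blast
  have des: "\<forall>i. 1 \<le> i \<and> i < n \<longrightarrow> desirable n v' i (Suc i)"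
  proof (intro allI impI)
    fix i assume i: "1 \<le> i \<and> i < n"
    show "desirable n v' i (Suc i)" unfolding desirable_def
    proof (intro allI impI)
      fix S assume S: "S \<subseteq> {1..n} - {i, Suc i}" and h: "v' (S \<union> {Suc i})"
      have S1: "S \<union> {Suc i} \<subseteq> N" and S0: "S \<union> {i} \<subseteq> N" using S i N_def by auto
      have iS: "i \<notin> S" "Suc i \<notin> S" using S by auto
      have h1: "v (S \<union> {Suc i})" "(S \<union> {Suc i}) \<inter> {..p} \<noteq> C" using h key'[OF S1] by auto
      have v0: "v (S \<union> {i})" using d i S h1(1) unfolding desirable_def by blast
      have "(S \<union> {i}) \<inter> {..p} \<noteq> C"
      proof
        assume R0: "(S \<union> {i}) \<inter> {..p} = C"
        show False
        proof (cases "i \<le> p")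
          case False
          then have "(S \<union> {i}) \<inter> {..p} = S \<inter> {..p}" "(S \<union> {Suc i}) \<inter> {..p} = S \<inter> {..p}" by auto
          then show False using R0 h1 by simp
        next
          case True
          then have iC: "i \<in> C" using R0 by auto
          have SC: "S \<inter> {..p} = C - {i}" using R0 iS by auto
          show False
          proof (cases "i = p")
            case True
            then have "(S \<union> {Suc i}) \<inter> {..p} = C - {p}" using SC by auto
            then have "v (C - {p})" using F1[OF S1 h1(1)] by simp
            then show False using Closs pC by auto
          next
            case False
            then have ip: "Suc i \<le> p" using \<open>i \<le> p\<close> by simp
            define C' where "C' = insert (Suc i) (C - {i})"
            have R1: "(S \<union> {Suc i}) \<inter> {..p} = C'" using SC ip C'_def by auto
            have vC': "v C'" using F1[OF S1 h1(1)] R1 by simp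
            have siC: "Suc i \<notin> C"
            proof
              assume "Suc i \<in> C"
              then have "C' = C - {i}" using C'_def by auto
              then show False using vC' Closs iC by auto
            qed
            have C'N: "C' \<subseteq> N" using CN i N_def C'_def by auto
            have C'M: "C' \<in> M" unfolding M_def min_winning_def
            proof (intro CollectI conjI ballI)
              show "C' \<subseteq> {1..n}" using C'N N_def by simp
              show "v C'" by (rule vC')
              fix k assume k: "k \<in> C'"
              show "\<not> v (C' - {k})"
              proof (cases "k = Suc i")
                case True
                then have "C' - {k} = C - {i}" using C'_def siC by auto
                then show ?thesis using Closs iC by simp
              next
                case False
                then have kC: "k \<in> C" "k \<noteq> i" using k C'_def by auto
                show ?thesis
                proof
                  assume vk: "v (C' - {k})"
                  have eq1: "C' - {k} = (C - {i, k}) \<union> {Suc i}" using C'_def False by auto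
                  have sub: "C - {i, k} \<subseteq> {1..n} - {i, Suc i}" using CN N_def siC by auto
                  have "v ((C - {i, k}) \<union> {i})" using d i sub vk eq1 unfolding desirable_def by metis
                  moreover have "(C - {i, k}) \<union> {i} = C - {k}" using iC kC by auto
                  ultimately show False using Closs kC by auto
                qed
              qed
            qed
            have pC': "p \<in> C'" using pC False C'_def by auto
            have finC': "finite C'" using C'N finN finite_subset by blast
            have sC: "sum u C = u i + sum u (C - {i})" using finC iC sum.remove by metis
            have sC': "sum u C' = u (Suc i) + sum u (C - {i})" using C'_def siC finC by simp
            have "u (Suc i) \<le> u i" using srt i by simp
            then have "sum u C' \<le> sum u C" using sC sC' by simp
            moreover have "sum u C \<le> sum u C'" using Cmin C'M pC' by simp
            ultimately have "sum u C' = sum u C" by simp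
            then have "\<Sum>C' \<le> \<Sum>C" using Cmax C'M pC' by simp
            moreover have "\<Sum>C = i + \<Sum>(C - {i})" using finC iC sum.remove by metis
            moreover have "\<Sum>C' = Suc i + \<Sum>(C - {i})" using C'_def siC finC by simp
            ultimately show False by simp
          qed
        qed
      qed
      then show "v' (S \<union> {i})" using key'[OF S0] v0 by simp
    qed
  qed
  have can: "canonical_wvg n v'" unfolding canonical_wvg_def using wvg des by simp
  have mw: "min_winning n v' = M - {C}"
  proof
    show "min_winning n v' \<subseteq> M - {C}"
    proof
      fix S assume "S \<in> min_winning n v'"
      then have SN: "S \<subseteq> N" and vS': "v' S" and ml: "\<forall>i\<in>S. \<not> v' (S - {i})"
        unfolding min_winning_def N_def by auto
      have vS: "v S" and SP: "S \<inter> {..p} \<noteq> C" using key'[OF SN] vS' by auto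
      have SC: "S \<noteq> C" using SP CPeq by auto
      have "\<forall>i\<in>S. \<not> v (S - {i})"
      proof (intro ballI notI)
        fix i assume iS: "i \<in> S" and vi: "v (S - {i})"
        have SiN: "S - {i} \<subseteq> N" using SN by auto
        have Ri: "(S - {i}) \<inter> {..p} = C" using ml iS key'[OF SiN] vi by auto
        have Csub: "C \<subseteq> S - {i}" using Ri by auto
        have pS: "p \<in> S" "p \<noteq> i" using Csub pC by auto
        have ilp: "i \<le> p"
        proof (rule ccontr)
          assume "\<not> i \<le> p"
          then have "S \<inter> {..p} = (S - {i}) \<inter> {..p}" by auto
          then show False using Ri SP by simp
        qed
        have iC: "i \<notin> C" using Csub by auto
        have i1: "1 \<le> i" using iS SN N_def by auto
        have "u p \<le> u i" using sorted_chain[OF srt i1 ilp] pN N_def by simp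
        moreover have "sum u (insert i (C - {p})) = u i + sum u (C - {p})" using finC iC by simp
        moreover have "sum u C = u p + sum u (C - {p})" using finC pC sum.remove by metis
        moreover have "q \<le> sum u C" using repN[OF CN] vC by simp
        moreover have XN: "insert i (C - {p}) \<subseteq> N" using CN iS SN by auto
        ultimately have vX: "v (insert i (C - {p}))" using repN[OF XN] by simp
        have "insert i (C - {p}) \<subseteq> S - {p}" using Csub iS pS by auto
        moreover have "S - {p} \<subseteq> N" using SN by auto
        ultimately have vSp: "v (S - {p})" using monoN vX by blast
        have "i \<in> (S - {p}) \<inter> {..p}" using iS pS ilp by auto
        then have "(S - {p}) \<inter> {..p} \<noteq> C" using iC by auto
        then have "v' (S - {p})" using key'[of "S - {p}"] SN vSp by auto
        then show False using ml pS by auto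
      qed
      then have "S \<in> M" using SN vS unfolding M_def min_winning_def N_def by auto
      then show "S \<in> M - {C}" using SC by simp
    qed
  next
    show "M - {C} \<subseteq> min_winning n v'"
    proof
      fix S assume S: "S \<in> M - {C}"
      then have SN: "S \<subseteq> N" and vS: "v S" and ml: "\<forall>i\<in>S. \<not> v (S - {i})" using MN by auto
      have "S \<inter> {..p} = S" using ple S by auto
      then have "v' S" using key'[OF SN] vS S by auto
      moreover have "\<forall>i\<in>S. \<not> v' (S - {i})"
      proof
        fix i assume "i \<in> S"
        moreover have "S - {i} \<subseteq> N" using SN by auto
        ultimately show "\<not> v' (S - {i})" using key' ml by blast
      qed
      ultimately show "S \<in> min_winning n v'" using SN unfolding min_winning_def N_def by auto
    qed
  qed
  show ?thesis using CM can mw M_def by blast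
qed

theorem lemma4:
  fixes n :: nat and v :: "nat set \<Rightarrow> bool"
  assumes "n \<ge> 1"
    and "canonical_wvg n v"
    and "min_winning n v \<noteq> {}"
  shows "\<exists>C \<in> min_winning n v. \<exists>v' :: nat set \<Rightarrow> bool.
           canonical_wvg n v' \<and> min_winning n v' = min_winning n v - {C}"
proof -
  obtain q w where q: "(q::real) \<ge> 0" "\<forall>i\<in>{1..n}. w i \<ge> 0"
    "\<forall>S. S \<subseteq> {1..n} \<longrightarrow> (v S \<longleftrightarrow> (\<Sum>i\<in>S. w i) \<ge> q)"
    using assms(2) unfolding canonical_wvg_def weighted_voting_game_def by blast
  have d: "\<forall>i. 1 \<le> i \<and> i < n \<longrightarrow> desirable n v i (Suc i)"
    using assms(2) unfolding canonical_wvg_def by blast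
  have "rep n v w q" using q unfolding rep_def by blast
  then obtain u where u: "rep n v u q" "\<forall>i\<in>{1..n}. 0 \<le> u i" "\<forall>i. 1 \<le> i \<and> i < n \<longrightarrow> u (Suc i) \<le> u i"
    using sorted_rep[OF _ q(2) d] by blast
  show ?thesis using main[OF u q(1) d assms(3)] .
qed

end
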